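(* Let $\Gamma$ be a metric graph and $D$ a vertex-supported effective divisor on $\Gamma$. Then the cell complex $|D|$ has finitely many cells.
   Context: A metric graph $\Gamma=(V,E)$ is a connected undirected graph whose edges have positive real lengths $M_e$. A divisor is a finite formal $\mathbb{Z}$-combination of points of $\Gamma$; effective means all coefficients are $\ge 0$; vertex-supported means its support lies in $V$. A rational function is a continuous function $\Gamma\to\mathbb{R}$ that is piecewise linear on each edge with finitely many pieces and integer slopes; $(f)=\sum_x \mathrm{ord}_x(f)x$, where $\mathrm{ord}_x(f)$ is the sum of outgoing slopes at $x$. $R(D)=\{f: D+(f)\text{ effective}\}$ and $|D|=\{D+(f):f\in R(D)\}$. Cells of $|D|$: identifying each open edge $e$ with $(0,M_e)$, a cell is given by data consisting of nonnegative integers $d_v$ ($v\in V$), ordered partitions $d_e=\sum_{i=1}^{r_e}d_e^i$ into positive integers on some edges $e$, and integers $m_e$ ($e\in E$); $L\in|D|$ lies in the cell iff $L(v)=d_v$ for all $v$, on each edge with a partition $L|_{e^\circ}=\sum_i d_e^i x_i$ with $0<x_1<\dots<x_{r_e}<M_e$, $L$ vanishes on the interiors of the other edges, and every $f\in R(D)$ with $L=D+(f)$ has outgoing slope $m_e$ at the point $0$ of $e$ for every $e$. These cells make $|D|$ a cell complex. *)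

theory Defs
  imports "HOL-Analysis.Analysis"
begin

text \<open>Each edge e is identified with the interval [0, len e], the point 0 being src e
  and the point len e being tgt e.\<close>

record ('v, 'e) mgraph =
  verts :: "'v set"
  edges :: "'e set"
  src :: "'e \<Rightarrow> 'v"
  tgt :: "'e \<Rightarrow> 'v"
  len :: "'e \<Rightarrow> real"

text \<open>Points of the metric graph: vertices, and interior points of edges
  (Ed e t with 0 < t < len e).\<close>

datatype ('v, 'e) point = Vx 'v | Ed 'e real

definition points :: "('v, 'e, 'z) mgraph_scheme \<Rightarrow> ('v, 'e) point set" where
  "points G = Vx ` verts G \<union> {Ed e t | e t. e \<in> edges G \<and> 0 < t \<and> t < len G e}"

definition metric_graph :: "('v, 'e, 'z) mgraph_scheme \<Rightarrow> bool" where
  "metric_graph G \<longleftrightarrow> finite (verts G) \<and> finite (edges G) \<and> verts G \<noteq> {} \<and>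
     (\<forall>e\<in>edges G. src G e \<in> verts G \<and> tgt G e \<in> verts G \<and> len G e > 0) \<and>
     (\<forall>u\<in>verts G. \<forall>w\<in>verts G.
        (u, w) \<in> ({(src G e, tgt G e) | e. e \<in> edges G} \<union>
                   {(tgt G e, src G e) | e. e \<in> edges G})\<^sup>*)"

definition edge_fun :: "('v, 'e, 'z) mgraph_scheme \<Rightarrow> (('v, 'e) point \<Rightarrow> real) \<Rightarrow> 'e \<Rightarrow> real \<Rightarrow> real" where
  "edge_fun G f e t = (if t \<le> 0 then f (Vx (src G e))
     else if t \<ge> len G e then f (Vx (tgt G e)) else f (Ed e t))"

text \<open>Piecewise linear with finitely many pieces and integer slopes on [a, b]
  (this includes continuity on [a, b]).\<close>

definition pl_int :: "(real \<Rightarrow> real) \<Rightarrow> real \<Rightarrow> real \<Rightarrow> bool" where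
  "pl_int g a b \<longleftrightarrow> (\<exists>(n::nat) (p::nat \<Rightarrow> real) (s::nat \<Rightarrow> int).
      p 0 = a \<and> p n = b \<and> (\<forall>i<n. p i < p (Suc i)) \<and>
      (\<forall>i<n. \<forall>t\<in>{p i..p (Suc i)}. g t = g (p i) + of_int (s i) * (t - p i)))"

text \<open>Rational functions on the metric graph (continuity is built into pl_int on each
  closed edge).\<close>

definition rational_fun :: "('v, 'e, 'z) mgraph_scheme \<Rightarrow> (('v, 'e) point \<Rightarrow> real) \<Rightarrow> bool" where
  "rational_fun G f \<longleftrightarrow> (\<forall>e\<in>edges G. pl_int (edge_fun G f e) 0 (len G e))"

definition rslope :: "(real \<Rightarrow> real) \<Rightarrow> real \<Rightarrow> real" where
  "rslope g t = Lim (at_right 0) (\<lambda>h. (g (t + h) - g t) / h)"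

definition lslope :: "(real \<Rightarrow> real) \<Rightarrow> real \<Rightarrow> real" where
  "lslope g t = Lim (at_left 0) (\<lambda>h. (g (t + h) - g t) / h)"

text \<open>ord_x(f): sum of outgoing slopes at x.\<close>

definition ord :: "('v, 'e, 'z) mgraph_scheme \<Rightarrow> (('v, 'e) point \<Rightarrow> real) \<Rightarrow> ('v, 'e) point \<Rightarrow> real" where
  "ord G f x = (case x of
      Vx v \<Rightarrow> (\<Sum>e\<in>{e\<in>edges G. src G e = v}. rslope (edge_fun G f e) 0)
             + (\<Sum>e\<in>{e\<in>edges G. tgt G e = v}. - lslope (edge_fun G f e) (len G e))
    | Ed e t \<Rightarrow> rslope (edge_fun G f e) t - lslope (edge_fun G f e) t)"

text \<open>The principal divisor (f), as a (real-valued, in fact integer-valued) function.\<close>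

definition prin :: "('v, 'e, 'z) mgraph_scheme \<Rightarrow> (('v, 'e) point \<Rightarrow> real) \<Rightarrow> ('v, 'e) point \<Rightarrow> real" where
  "prin G f x = (if x \<in> points G then ord G f x else 0)"

definition vertex_supported_effective :: "('v, 'e, 'z) mgraph_scheme \<Rightarrow> (('v, 'e) point \<Rightarrow> int) \<Rightarrow> bool" where
  "vertex_supported_effective G D \<longleftrightarrow> (\<forall>x. D x \<ge> 0) \<and> (\<forall>x. D x \<noteq> 0 \<longrightarrow> x \<in> Vx ` verts G)"

definition RD :: "('v, 'e, 'z) mgraph_scheme \<Rightarrow> (('v, 'e) point \<Rightarrow> int) \<Rightarrow> (('v, 'e) point \<Rightarrow> real) set" where
  "RD G D = {f. rational_fun G f \<and> (\<forall>x. real_of_int (D x) + prin G f x \<ge> 0)}"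

definition linsys :: "('v, 'e, 'z) mgraph_scheme \<Rightarrow> (('v, 'e) point \<Rightarrow> int) \<Rightarrow> (('v, 'e) point \<Rightarrow> int) set" where
  "linsys G D = {L. \<exists>f\<in>RD G D. \<forall>x. real_of_int (L x) = real_of_int (D x) + prin G f x}"

text \<open>Membership of L in the cell with data (dv, P, m): dv v = d_v, P e the ordered
  partition of d_e on edge e (the empty list meaning that e carries no partition),
  m e = m_e.\<close>

definition in_cell :: "('v, 'e, 'z) mgraph_scheme \<Rightarrow> (('v, 'e) point \<Rightarrow> int) \<Rightarrow>
    ('v \<Rightarrow> nat) \<Rightarrow> ('e \<Rightarrow> nat list) \<Rightarrow> ('e \<Rightarrow> int) \<Rightarrow> (('v, 'e) point \<Rightarrow> int) \<Rightarrow> bool" where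
  "in_cell G D dv P m L \<longleftrightarrow> L \<in> linsys G D \<and>
     (\<forall>v\<in>verts G. L (Vx v) = int (dv v)) \<and>
     (\<forall>e\<in>edges G. (\<forall>i<length (P e). P e ! i > 0) \<and>
        (\<exists>xs::real list. length xs = length (P e) \<and> sorted_wrt (<) xs \<and>
           (\<forall>x\<in>set xs. 0 < x \<and> x < len G e) \<and>
           (\<forall>t. 0 < t \<and> t < len G e \<longrightarrow>
              L (Ed e t) = (\<Sum>i<length xs. if xs ! i = t then int (P e ! i) else 0)))) \<and>
     (\<forall>f\<in>RD G D. (\<forall>x. real_of_int (L x) = real_of_int (D x) + prin G f x) \<longrightarrow>
        (\<forall>e\<in>edges G. rslope (edge_fun G f e) 0 = of_int (m e)))"

definition cell :: "('v, 'e, 'z) mgraph_scheme \<Rightarrow> (('v, 'e) point \<Rightarrow> int) \<Rightarrow>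
    ('v \<Rightarrow> nat) \<Rightarrow> ('e \<Rightarrow> nat list) \<Rightarrow> ('e \<Rightarrow> int) \<Rightarrow> (('v, 'e) point \<Rightarrow> int) set" where
  "cell G D dv P m = {L. in_cell G D dv P m L}"

definition cells :: "('v, 'e, 'z) mgraph_scheme \<Rightarrow> (('v, 'e) point \<Rightarrow> int) \<Rightarrow>
    (('v, 'e) point \<Rightarrow> int) set set" where
  "cells G D = {cell G D dv P m | dv P m. cell G D dv P m \<noteq> {}}"

end

theory Submission
  imports Defs
begin

lemma p_strict:
  assumes "\<forall>i<n. p i < p (Suc i)"
  shows "i < j \<Longrightarrow> j \<le> n \<Longrightarrow> (p i :: real) < p j"
proof (induction j)
  case 0 then show ?case by simp
next
  case (Suc j)
  have jn: "j < n" using Suc.prems by simp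
  have st: "p j < p (Suc j)" using assms jn by simp
  show ?case
  proof (cases "i = j")
    case True then show ?thesis using st by simp
  next
    case False
    then have "p i < p j" using Suc.IH Suc.prems by simp
    then show ?thesis using st by simp
  qed
qed

lemma find_piece:
  "\<forall>i<n. p i < p (Suc i) \<Longrightarrow> p 0 \<le> t \<Longrightarrow> t < p n \<Longrightarrow> \<exists>i<n. p i \<le> (t::real) \<and> t < p (Suc i)"
proof (induction n)
  case 0 then show ?case by simp
next
  case (Suc n)
  show ?case
  proof (cases "t < p n")
    case True
    have "\<forall>i<n. p i < p (Suc i)" using Suc.prems(1) by simp
    then obtain i where "i<n" "p i \<le> t \<and> t < p (Suc i)" using Suc.IH Suc.prems(2) True by blast
    then show ?thesis by (intro exI[of _ i]) auto
  next
    case False then show ?thesis using Suc.prems by (intro exI[of _ n]) auto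
  qed
qed

lemma rslope_piece:
  assumes "a < b" "\<forall>t\<in>{a..b}. g t = g a + c * (t - a)" "a \<le> t" "t < b"
  shows "rslope g t = c"
  unfolding rslope_def
proof (rule tendsto_Lim[OF trivial_limit_at_right_real], rule tendsto_eventually)
  show "\<forall>\<^sub>F h in at_right 0. (g (t + h) - g t) / h = c"
    unfolding eventually_at_right_field
  proof (intro exI[of _ "b - t"] conjI allI impI)
    fix y :: real assume y: "0 < y" "y < b - t"
    have "t + y \<in> {a..b}" "t \<in> {a..b}" using assms y by auto
    then have "g (t + y) = g a + c * (t + y - a)" "g t = g a + c * (t - a)"
      using assms(2) by blast+
    then have "g (t + y) - g t = c * y" by (simp add: algebra_simps)
    then show "(g (t + y) - g t) / y = c" using y by simp
  qed (use assms in auto)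
qed

lemma lslope_piece:
  assumes "a < b" "\<forall>t\<in>{a..b}. g t = g a + c * (t - a)" "a < t" "t \<le> b"
  shows "lslope g t = c"
  unfolding lslope_def
proof (rule tendsto_Lim[OF trivial_limit_at_left_real], rule tendsto_eventually)
  show "\<forall>\<^sub>F h in at_left 0. (g (t + h) - g t) / h = c"
    unfolding eventually_at_left_field
  proof (intro exI[of _ "a - t"] conjI allI impI)
    fix y :: real assume y: "a - t < y" "y < 0"
    have "t + y \<in> {a..b}" "t \<in> {a..b}" using assms y by auto
    then have "g (t + y) = g a + c * (t + y - a)" "g t = g a + c * (t - a)"
      using assms(2) by blast+
    then have "g (t + y) - g t = c * y" by (simp add: algebra_simps)
    then show "(g (t + y) - g t) / y = c" using y by simp
  qed (use assms in auto)
qed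

lemma tele_Suc:
  "(\<Sum>i\<in>{1..<Suc k}. (h i - h (i - 1) :: real)) = h k - h 0"
proof (induction k)
  case 0 then show ?case by simp
next
  case (Suc k)
  have "{1..<Suc (Suc k)} = insert (Suc k) {1..<Suc k}" by auto
  then have "(\<Sum>i\<in>{1..<Suc (Suc k)}. (h i - h (i - 1) :: real)) = (h (Suc k) - h k) + (\<Sum>i\<in>{1..<Suc k}. h i - h (i - 1))"
    by simp
  then show ?case using Suc.IH by simp
qed

lemma edge_analysis:
  fixes g :: "real \<Rightarrow> real" and M :: real
  assumes pl: "pl_int g 0 M" and M: "M > 0"
    and jpos: "\<And>t. 0 < t \<Longrightarrow> t < M \<Longrightarrow> rslope g t - lslope g t \<ge> 0"
  obtains s0 s1 :: int where "rslope g 0 = s0" "lslope g M = s1" "s0 \<le> s1"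
    "s0 * M \<le> g M - g 0" "g M - g 0 \<le> s1 * M"
    "\<And>T. finite T \<Longrightarrow> T \<subseteq> {0<..<M} \<Longrightarrow> (\<Sum>t\<in>T. rslope g t - lslope g t) \<le> s1 - s0"
proof -
  from pl obtain n p s where p0: "p 0 = 0" and pn: "p n = M"
    and inc: "\<forall>i<n. p i < p (Suc i)"
    and lin: "\<forall>i<n. \<forall>t\<in>{p i..p (Suc i)}. g t = g (p i) + of_int (s i) * (t - p i)"
    unfolding pl_int_def by blast
  have n: "n \<ge> 1" using p0 pn M by (cases n) auto
  have mono: "\<And>i j. i < j \<Longrightarrow> j \<le> n \<Longrightarrow> p i < p j" using p_strict[OF inc] by blast
  have mono': "\<And>i j. i \<le> j \<Longrightarrow> j \<le> n \<Longrightarrow> p i \<le> p j"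
    using mono by (metis order_le_less order_less_imp_le)
  have rs: "\<And>i t. i < n \<Longrightarrow> p i \<le> t \<Longrightarrow> t < p (Suc i) \<Longrightarrow> rslope g t = s i"
  proof -
    fix i t assume "i < n" "p i \<le> t" "t < p (Suc i)"
    then show "rslope g t = s i"
      using rslope_piece[of "p i" "p (Suc i)" g "of_int (s i)" t] inc lin by blast
  qed
  have ls: "\<And>i t. i < n \<Longrightarrow> p i < t \<Longrightarrow> t \<le> p (Suc i) \<Longrightarrow> lslope g t = s i"
  proof -
    fix i t assume "i < n" "p i < t" "t \<le> p (Suc i)"
    then show "lslope g t = s i"
      using lslope_piece[of "p i" "p (Suc i)" g "of_int (s i)" t] inc lin by blast
  qed
  have jump_brk: "\<And>i. 0 < i \<Longrightarrow> i < n \<Longrightarrow> rslope g (p i) - lslope g (p i) = s i - s (i - 1)"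
  proof -
    fix i assume i: "0 < i" "i < n"
    have "rslope g (p i) = s i" using rs[of i "p i"] i inc by auto
    moreover have "lslope g (p i) = s (i - 1)" using ls[of "i - 1" "p i"] i mono[of "i - 1" i] by auto
    ultimately show "rslope g (p i) - lslope g (p i) = s i - s (i - 1)" by simp
  qed
  have step: "\<And>i. 0 < i \<Longrightarrow> i < n \<Longrightarrow> s (i - 1) \<le> s i"
  proof -
    fix i assume i: "0 < i" "i < n"
    have "0 < p i" using mono[of 0 i] i p0 by auto
    moreover have "p i < M" using mono[of i n] i pn by auto
    ultimately have "rslope g (p i) - lslope g (p i) \<ge> 0" using jpos by blast
    then show "s (i - 1) \<le> s i" using jump_brk[OF i] by simp
  qed
  have smono: "\<And>i j. i \<le> j \<Longrightarrow> j < n \<Longrightarrow> s i \<le> s j"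
  proof -
    fix i j :: nat
    show "i \<le> j \<Longrightarrow> j < n \<Longrightarrow> s i \<le> s j"
    proof (induction j)
      case 0 then show ?case by simp
    next
      case (Suc j)
      show ?case
      proof (cases "i = Suc j")
        case True then show ?thesis by simp
      next
        case False
        then have "s i \<le> s j" using Suc by simp
        moreover have "s j \<le> s (Suc j)" using step[of "Suc j"] Suc.prems by simp
        ultimately show ?thesis by simp
      qed
    qed
  qed
  have tele: "\<And>j. j \<le> n \<Longrightarrow> g (p j) - g (p 0) = (\<Sum>i<j. of_int (s i) * (p (Suc i) - p i))"
  proof -
    fix j :: nat
    show "j \<le> n \<Longrightarrow> g (p j) - g (p 0) = (\<Sum>i<j. of_int (s i) * (p (Suc i) - p i))"
    proof (induction j)
      case 0 then show ?case by simp
    next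
      case (Suc j)
      have jn: "j < n" using Suc.prems by simp
      have "p (Suc j) \<in> {p j..p (Suc j)}" using inc jn by auto
      then have "g (p (Suc j)) = g (p j) + of_int (s j) * (p (Suc j) - p j)"
        using lin jn by blast
      then show ?case using Suc.IH jn by simp
    qed
  qed
  have g0: "g 0 = g (p 0)" using p0 by simp
  have gM: "g M = g (p n)" using pn by simp
  have dpos: "\<And>i. i < n \<Longrightarrow> p (Suc i) - p i > 0" using inc by simp
  have sumd: "(\<Sum>i<n. p (Suc i) - p i) = M" using sum_lessThan_telescope[of p n] p0 pn by simp
  have low: "of_int (s 0) * M \<le> g M - g 0"
  proof -
    have "of_int (s 0) * M = (\<Sum>i<n. of_int (s 0) * (p (Suc i) - p i))"
      using sumd sum_distrib_left[of "of_int (s 0)" "\<lambda>i. p (Suc i) - p i" "{..<n}"] by simp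
    also have "\<dots> \<le> (\<Sum>i<n. of_int (s i) * (p (Suc i) - p i))"
      by (rule sum_mono) (use smono dpos in \<open>auto intro!: mult_right_mono\<close>)
    also have "\<dots> = g M - g 0" using tele[of n] g0 gM by simp
    finally show ?thesis .
  qed
  have high: "g M - g 0 \<le> of_int (s (n - 1)) * M"
  proof -
    have "g M - g 0 = (\<Sum>i<n. of_int (s i) * (p (Suc i) - p i))" using tele[of n] g0 gM by simp
    also have "\<dots> \<le> (\<Sum>i<n. of_int (s (n - 1)) * (p (Suc i) - p i))"
      by (rule sum_mono) (use smono dpos in \<open>auto intro!: mult_right_mono\<close>)
    also have "\<dots> = of_int (s (n - 1)) * M"
      using sumd sum_distrib_left[of "of_int (s (n - 1))" "\<lambda>i. p (Suc i) - p i" "{..<n}"] by simp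
    finally show ?thesis .
  qed
  have r0: "rslope g 0 = s 0" using rs[of 0 0] p0 inc n by auto
  have lM: "lslope g M = s (n - 1)" using ls[of "n - 1" M] pn mono[of "n - 1" n] n by auto
  have s01: "s 0 \<le> s (n - 1)" using smono n by simp
  define d where "d i = real_of_int (s i) - real_of_int (s (i - 1))" for i
  have dnn: "\<And>i. i \<in> {1..<n} \<Longrightarrow> d i \<ge> 0" using step unfolding d_def by force
  have inj: "\<And>i j. i \<le> n \<Longrightarrow> j \<le> n \<Longrightarrow> p i = p j \<Longrightarrow> i = j"
    using mono by (metis less_irrefl nat_neq_iff)
  have jform: "\<And>t. 0 < t \<Longrightarrow> t < M \<Longrightarrow>
      rslope g t - lslope g t = (\<Sum>i\<in>{1..<n}. if p i = t then d i else 0)"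
  proof -
    fix t assume t: "0 < t" "t < M"
    obtain i where i: "i < n" "p i \<le> t" "t < p (Suc i)"
      using find_piece[OF inc, of t] p0 pn t by auto
    show "rslope g t - lslope g t = (\<Sum>i\<in>{1..<n}. if p i = t then d i else 0)"
    proof (cases "p i < t")
      case True
      have "rslope g t = s i" using rs i by blast
      moreover have "lslope g t = s i" using ls i True by simp
      moreover have "\<forall>j\<in>{1..<n}. p j \<noteq> t"
      proof
        fix j assume j: "j \<in> {1..<n}"
        show "p j \<noteq> t"
        proof (cases "j \<le> i")
          case True then show ?thesis using mono'[of j i] i \<open>p i < t\<close> by auto
        next
          case False then show ?thesis using mono'[of "Suc i" j] i j by auto
        qed
      qed
      ultimately show ?thesis by simp
    next
      case False
      then have pit: "p i = t" using i by simp
      then have i0: "0 < i" using p0 t by (cases i) auto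
      have "rslope g t - lslope g t = d i" using jump_brk[of i] i0 i pit unfolding d_def by simp
      moreover have "(\<Sum>j\<in>{1..<n}. if p j = t then d j else 0) = (\<Sum>j\<in>{1..<n}. if j = i then d j else 0)"
        by (rule sum.cong) (use inj i pit in auto)
      moreover have "\<dots> = d i" using i i0 by (simp add: sum.delta)
      ultimately show ?thesis by simp
    qed
  qed
  have jsum: "(\<Sum>t\<in>T. rslope g t - lslope g t) \<le> s (n - 1) - s 0"
    if T: "finite T" "T \<subseteq> {0<..<M}" for T
  proof -
    have "(\<Sum>t\<in>T. rslope g t - lslope g t) = (\<Sum>t\<in>T. \<Sum>i\<in>{1..<n}. if p i = t then d i else 0)"
      by (rule sum.cong) (use T jform in auto)
    also have "\<dots> = (\<Sum>i\<in>{1..<n}. \<Sum>t\<in>T. if p i = t then d i else 0)" by (rule sum.swap)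
    also have "\<dots> = (\<Sum>i\<in>{1..<n}. if p i \<in> T then d i else 0)"
      using T(1) by (simp add: sum.delta')
    also have "\<dots> \<le> (\<Sum>i\<in>{1..<n}. d i)" by (rule sum_mono) (use dnn in auto)
    also have "\<dots> = s (n - 1) - s 0"
      using tele_Suc[of "\<lambda>i. real_of_int (s i)" "n - 1"] n unfolding d_def by simp
    finally show ?thesis .
  qed
  show ?thesis
    by (rule that[of "s 0" "s (n - 1)"]) (use r0 lM s01 low high jsum in auto)
qed

lemma cut_sum:
  fixes a b :: "'e \<Rightarrow> real"
  assumes "finite E" "finite S"
  shows "(\<Sum>v\<in>S. (\<Sum>e\<in>{e\<in>E. sr e = v}. a e) + (\<Sum>e\<in>{e\<in>E. tg e = v}. b e))
       = (\<Sum>e\<in>E. (if sr e \<in> S then a e else 0) + (if tg e \<in> S then b e else 0))"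
proof -
  have A: "(\<Sum>v\<in>S. \<Sum>e\<in>{e\<in>E. sr e = v}. a e) = (\<Sum>e\<in>E. if sr e \<in> S then a e else 0)"
  proof -
    have "(\<Sum>v\<in>S. \<Sum>e\<in>{e\<in>E. sr e = v}. a e) = (\<Sum>v\<in>S. \<Sum>e\<in>E. if sr e = v then a e else 0)"
      using assms by (simp add: sum.inter_filter)
    also have "\<dots> = (\<Sum>e\<in>E. \<Sum>v\<in>S. if sr e = v then a e else 0)" by (rule sum.swap)
    also have "\<dots> = (\<Sum>e\<in>E. if sr e \<in> S then a e else 0)" using assms by (simp add: sum.delta)
    finally show ?thesis .
  qed
  have B: "(\<Sum>v\<in>S. \<Sum>e\<in>{e\<in>E. tg e = v}. b e) = (\<Sum>e\<in>E. if tg e \<in> S then b e else 0)"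
  proof -
    have "(\<Sum>v\<in>S. \<Sum>e\<in>{e\<in>E. tg e = v}. b e) = (\<Sum>v\<in>S. \<Sum>e\<in>E. if tg e = v then b e else 0)"
      using assms by (simp add: sum.inter_filter)
    also have "\<dots> = (\<Sum>e\<in>E. \<Sum>v\<in>S. if tg e = v then b e else 0)" by (rule sum.swap)
    also have "\<dots> = (\<Sum>e\<in>E. if tg e \<in> S then b e else 0)" using assms by (simp add: sum.delta)
    finally show ?thesis .
  qed
  show ?thesis using A B by (simp add: sum.distrib)
qed

lemma slope_bounds:
  fixes a b fv :: "_ \<Rightarrow> real" and Dv :: "'v \<Rightarrow> real"
  assumes V: "finite V" and E: "finite E"
    and Dnn: "\<forall>v\<in>V. Dv v \<ge> 0"
    and vert: "\<forall>v\<in>V. Dv v + (\<Sum>e\<in>{e\<in>E. sr e = v}. a e) + (\<Sum>e\<in>{e\<in>E. tg e = v}. b e) \<ge> 0"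
    and E1: "\<forall>e\<in>E. a e + b e \<le> 0"
    and E2: "\<forall>e\<in>E. fv (tg e) \<le> fv (sr e) \<longrightarrow> a e \<le> 0"
    and E3: "\<forall>e\<in>E. fv (sr e) \<le> fv (tg e) \<longrightarrow> b e \<le> 0"
    and SV: "\<forall>e\<in>E. sr e \<in> V \<and> tg e \<in> V"
    and e: "e \<in> E"
  shows "\<bar>a e\<bar> \<le> (\<Sum>v\<in>V. Dv v) \<and> \<bar>b e\<bar> \<le> (\<Sum>v\<in>V. Dv v)"
proof -
  define N where "N = (\<Sum>v\<in>V. Dv v)"
  define ct where "ct c e = (if c \<le> fv (sr e) \<and> sr e \<in> V then a e else 0)
      + (if c \<le> fv (tg e) \<and> tg e \<in> V then b e else 0)" for c e
  have cut: "ct c e0 \<ge> - N" if e0: "e0 \<in> E" for c e0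
  proof -
    define S where "S = {v\<in>V. c \<le> fv v}"
    have S: "finite S" "S \<subseteq> V" using V unfolding S_def by auto
    have ctS: "ct c e = (if sr e \<in> S then a e else 0) + (if tg e \<in> S then b e else 0)" for e
      unfolding ct_def S_def by auto
    have neg: "ct c e \<le> 0" if "e \<in> E" for e
      using E1 E2 E3 SV that unfolding ct_def by (auto split: if_splits)
    have "0 \<le> (\<Sum>v\<in>S. Dv v + (\<Sum>e\<in>{e\<in>E. sr e = v}. a e) + (\<Sum>e\<in>{e\<in>E. tg e = v}. b e))"
      by (rule sum_nonneg) (use vert S in auto)
    also have "\<dots> = (\<Sum>v\<in>S. Dv v) + (\<Sum>v\<in>S. (\<Sum>e\<in>{e\<in>E. sr e = v}. a e) + (\<Sum>e\<in>{e\<in>E. tg e = v}. b e))"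
      by (simp add: sum.distrib add.assoc)
    also have "\<dots> = (\<Sum>v\<in>S. Dv v) + (\<Sum>e\<in>E. ct c e)"
      using cut_sum[OF E S(1), where sr=sr and tg=tg and a=a and b=b] ctS by simp
    also have "(\<Sum>v\<in>S. Dv v) \<le> N"
      unfolding N_def by (rule sum_mono2[OF V S(2)]) (use Dnn in auto)
    also have "(\<Sum>e\<in>E. ct c e) = ct c e0 + (\<Sum>e\<in>E - {e0}. ct c e)"
      using E e0 by (simp add: sum.remove)
    also have "(\<Sum>e\<in>E - {e0}. ct c e) \<le> 0" by (rule sum_nonpos) (use neg in auto)
    finally show ?thesis by simp
  qed
  have sV: "sr e \<in> V" "tg e \<in> V" using SV e by auto
  have N0: "N \<ge> 0" unfolding N_def using Dnn by (simp add: sum_nonneg)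
  have c1: "a e + b e \<ge> - N" using cut[OF e, of "min (fv (sr e)) (fv (tg e))"] sV
    unfolding ct_def by simp
  have c2: "ct (max (fv (sr e)) (fv (tg e))) e \<ge> - N" using cut[OF e] .
  have e1: "a e + b e \<le> 0" using E1 e by auto
  show ?thesis
  proof (cases "fv (tg e) \<le> fv (sr e)")
    case True
    have a0: "a e \<le> 0" using E2 e True by auto
    show ?thesis
    proof (cases "fv (sr e) \<le> fv (tg e)")
      case True2: True
      have "b e \<le> 0" using E3 e True2 by auto
      then show ?thesis using a0 c1 N0 unfolding N_def[symmetric] by auto
    next
      case False
      then have "a e \<ge> - N" using c2 True sV unfolding ct_def by (simp add: max_def)
      then show ?thesis using a0 c1 e1 N0 unfolding N_def[symmetric] by auto
    qed
  next
    case False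
    have b0: "b e \<le> 0" using E3 e False by auto
    have "b e \<ge> - N" using c2 False sV unfolding ct_def by (simp add: max_def)
    then show ?thesis using b0 c1 e1 N0 unfolding N_def[symmetric] by auto
  qed
qed

lemma mg_facts:
  assumes "metric_graph G"
  shows "finite (verts G)" "finite (edges G)"
    "\<And>e. e \<in> edges G \<Longrightarrow> src G e \<in> verts G \<and> tgt G e \<in> verts G \<and> len G e > 0"
  using assms unfolding metric_graph_def by blast+

lemma ed_points: "e \<in> edges G \<Longrightarrow> 0 < t \<Longrightarrow> t < len G e \<Longrightarrow> Ed e t \<in> points G"
  unfolding points_def by auto

lemma vx_points: "v \<in> verts G \<Longrightarrow> Vx v \<in> points G"
  unfolding points_def by auto

lemma D_ed: "vertex_supported_effective G D \<Longrightarrow> D (Ed e t) = 0"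
  unfolding vertex_supported_effective_def by auto

lemma prin_ed: "e \<in> edges G \<Longrightarrow> 0 < t \<Longrightarrow> t < len G e \<Longrightarrow>
   prin G f (Ed e t) = rslope (edge_fun G f e) t - lslope (edge_fun G f e) t"
  unfolding prin_def ord_def using ed_points[of e G t] by auto

lemma prin_vx: "v \<in> verts G \<Longrightarrow>
   prin G f (Vx v) = (\<Sum>e\<in>{e\<in>edges G. src G e = v}. rslope (edge_fun G f e) 0)
             + (\<Sum>e\<in>{e\<in>edges G. tgt G e = v}. - lslope (edge_fun G f e) (len G e))"
  unfolding prin_def ord_def using vx_points[of v G] by auto

lemma RD_slopes:
  assumes mg: "metric_graph G" and vse: "vertex_supported_effective G D" and f: "f \<in> RD G D"
    and e: "e \<in> edges G"
  shows "\<bar>rslope (edge_fun G f e) 0\<bar> \<le> (\<Sum>v\<in>verts G. real_of_int (D (Vx v)))"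
    "\<bar>lslope (edge_fun G f e) (len G e)\<bar> \<le> (\<Sum>v\<in>verts G. real_of_int (D (Vx v)))"
    "\<And>T. finite T \<Longrightarrow> T \<subseteq> {0<..<len G e} \<Longrightarrow>
       (\<Sum>t\<in>T. rslope (edge_fun G f e) t - lslope (edge_fun G f e) t)
         \<le> 2 * (\<Sum>v\<in>verts G. real_of_int (D (Vx v)))"
proof -
  define N where "N = (\<Sum>v\<in>verts G. real_of_int (D (Vx v)))"
  define g where "g e = edge_fun G f e" for e
  define a where "a e = rslope (g e) 0" for e
  define b where "b e = - lslope (g e) (len G e)" for e
  note fin = mg_facts[OF mg]
  have rf: "rational_fun G f" and nn: "\<And>x. real_of_int (D x) + prin G f x \<ge> 0"
    using f unfolding RD_def by auto
  have ea: "a e + b e \<le> 0 \<and>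
      a e * len G e \<le> f (Vx (tgt G e)) - f (Vx (src G e)) \<and>
      f (Vx (tgt G e)) - f (Vx (src G e)) \<le> - b e * len G e \<and>
      (\<forall>T. finite T \<longrightarrow> T \<subseteq> {0<..<len G e} \<longrightarrow> (\<Sum>t\<in>T. rslope (g e) t - lslope (g e) t) \<le> - b e - a e)"
    if e: "e \<in> edges G" for e
  proof -
    have M: "len G e > 0" using fin(3)[OF e] by simp
    have pl: "pl_int (g e) 0 (len G e)" using rf e unfolding rational_fun_def g_def by auto
    have jpos: "rslope (g e) t - lslope (g e) t \<ge> 0" if "0 < t" "t < len G e" for t
      using nn[of "Ed e t"] prin_ed[OF e that, of f] D_ed[OF vse] unfolding g_def by simp
    have gM: "g e (len G e) = f (Vx (tgt G e))" using M unfolding g_def edge_fun_def by simp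
    have g0: "g e 0 = f (Vx (src G e))" unfolding g_def edge_fun_def by simp
    show ?thesis
    proof (rule edge_analysis[OF pl M jpos])
      fix s0 s1 :: int assume o1: "rslope (g e) 0 = s0" and o2: "lslope (g e) (len G e) = s1"
        and o3: "s0 \<le> s1"
        and o4: "s0 * len G e \<le> g e (len G e) - g e 0" and o5: "g e (len G e) - g e 0 \<le> s1 * len G e"
        and o6: "\<And>T. finite T \<Longrightarrow> T \<subseteq> {0<..<len G e} \<Longrightarrow> (\<Sum>t\<in>T. rslope (g e) t - lslope (g e) t) \<le> s1 - s0"
      have A: "a e = s0" using o1 unfolding a_def .
      have B: "- b e = s1" using o2 unfolding b_def by simp
      show ?thesis
      proof (intro conjI allI impI)
        show "a e + b e \<le> 0" using A B o3 by linarith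
        show "a e * len G e \<le> f (Vx (tgt G e)) - f (Vx (src G e))" using A o4 gM g0 by simp
        show "f (Vx (tgt G e)) - f (Vx (src G e)) \<le> - b e * len G e" using B o5 gM g0 by simp
        fix T :: "real set" assume T: "finite T" "T \<subseteq> {0<..<len G e}"
        show "(\<Sum>t\<in>T. rslope (g e) t - lslope (g e) t) \<le> - b e - a e"
          using o6[OF T] A B by simp
      qed
    qed
  qed
  have E1: "\<forall>e\<in>edges G. a e + b e \<le> 0" using ea by blast
  have E2: "\<forall>e\<in>edges G. f (Vx (tgt G e)) \<le> f (Vx (src G e)) \<longrightarrow> a e \<le> 0"
  proof (intro ballI impI)
    fix e assume e: "e \<in> edges G" and le: "f (Vx (tgt G e)) \<le> f (Vx (src G e))"
    have M: "len G e > 0" using fin(3)[OF e] by simp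
    have "a e * len G e \<le> f (Vx (tgt G e)) - f (Vx (src G e))" using ea[OF e] by (rule conjunct1[OF conjunct2])
    then show "a e \<le> 0" using le M mult_pos_pos[of "a e" "len G e"] by linarith
  qed
  have E3: "\<forall>e\<in>edges G. f (Vx (src G e)) \<le> f (Vx (tgt G e)) \<longrightarrow> b e \<le> 0"
  proof (intro ballI impI)
    fix e assume e: "e \<in> edges G" and le: "f (Vx (src G e)) \<le> f (Vx (tgt G e))"
    have M: "len G e > 0" using fin(3)[OF e] by simp
    have "f (Vx (tgt G e)) - f (Vx (src G e)) \<le> - b e * len G e"
      using ea[OF e] by (rule conjunct1[OF conjunct2[OF conjunct2]])
    then show "b e \<le> 0" using le M mult_pos_pos[of "b e" "len G e"] by linarith
  qed
  have vert: "\<forall>v\<in>verts G. real_of_int (D (Vx v)) + (\<Sum>e\<in>{e\<in>edges G. src G e = v}. a e)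
      + (\<Sum>e\<in>{e\<in>edges G. tgt G e = v}. b e) \<ge> 0"
  proof
    fix v assume v: "v \<in> verts G"
    have "real_of_int (D (Vx v)) + prin G f (Vx v) \<ge> 0" using nn by blast
    then show "real_of_int (D (Vx v)) + (\<Sum>e\<in>{e\<in>edges G. src G e = v}. a e)
      + (\<Sum>e\<in>{e\<in>edges G. tgt G e = v}. b e) \<ge> 0"
      unfolding prin_vx[OF v] a_def b_def g_def by (simp add: add.assoc)
  qed
  have Dnn: "\<forall>v\<in>verts G. real_of_int (D (Vx v)) \<ge> 0"
    using vse unfolding vertex_supported_effective_def by simp
  have bnd: "\<bar>a e\<bar> \<le> N \<and> \<bar>b e\<bar> \<le> N"
    using slope_bounds[OF fin(1) fin(2) Dnn vert E1 E2 E3 _ e] fin(3) unfolding N_def by blast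
  then show "\<bar>rslope (edge_fun G f e) 0\<bar> \<le> N" "\<bar>lslope (edge_fun G f e) (len G e)\<bar> \<le> N"
    unfolding a_def b_def g_def by auto
  show "(\<Sum>t\<in>T. rslope (edge_fun G f e) t - lslope (edge_fun G f e) t) \<le> 2 * N"
    if "finite T" "T \<subseteq> {0<..<len G e}" for T
  proof -
    have "(\<Sum>t\<in>T. rslope (g e) t - lslope (g e) t) \<le> - b e - a e"
      using conjunct2[OF conjunct2[OF conjunct2[OF ea[OF e]]]] that by blast
    then show ?thesis using bnd unfolding g_def by linarith
  qed
qed

lemma cell_restrict: "cell G D dv P m = cell G D (\<lambda>v. if v\<in>verts G then dv v else 0)
   (\<lambda>e. if e\<in>edges G then P e else []) (\<lambda>e. if e\<in>edges G then m e else 0)"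
  unfolding cell_def in_cell_def by (simp cong: ball_cong)

lemma finite_funs:
  assumes "finite K" "\<And>x. x \<in> K \<Longrightarrow> finite (A x)" "\<And>x. x \<notin> K \<Longrightarrow> A x = {c}"
  shows "finite {h. \<forall>x. h x \<in> A x}"
proof -
  have "{h. \<forall>x. h x \<in> A x} \<subseteq> (\<lambda>g x. if x \<in> K then g x else c) ` (PiE K A)"
  proof
    fix h assume h: "h \<in> {h. \<forall>x. h x \<in> A x}"
    have "h = (\<lambda>x. if x \<in> K then restrict h K x else c)"
      using h assms(3) by (auto simp: fun_eq_iff)
    moreover have "restrict h K \<in> PiE K A" using h by auto
    ultimately show "h \<in> (\<lambda>g x. if x \<in> K then g x else c) ` (PiE K A)" by blast
  qed
  moreover have "finite (PiE K A)" using assms by (intro finite_PiE) auto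
  ultimately show ?thesis using finite_subset by blast
qed

lemma length_le_sum_list: "(\<forall>x\<in>set xs. 0 < x) \<Longrightarrow> length xs \<le> sum_list (xs :: nat list)"
  by (induction xs) auto

lemma sum_sub_bound:
  fixes h :: "'e \<Rightarrow> real"
  assumes "finite E" "\<forall>e\<in>E. \<bar>h e\<bar> \<le> N"
  shows "(\<Sum>e\<in>{e\<in>E. Q e}. h e) \<le> real (card E) * N"
proof -
  have "(\<Sum>e\<in>{e\<in>E. Q e}. h e) \<le> (\<Sum>e\<in>{e\<in>E. Q e}. \<bar>h e\<bar>)" by (rule sum_mono) auto
  also have "\<dots> \<le> (\<Sum>e\<in>E. \<bar>h e\<bar>)" by (rule sum_mono2) (use assms in auto)
  also have "\<dots> \<le> real (card E) * N" using sum_bounded_above[of E "\<lambda>e. \<bar>h e\<bar>" N] assms by auto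
  finally show ?thesis .
qed

theorem corollary2p7:
  fixes G :: "('v, 'e) mgraph" and D :: "('v, 'e) point \<Rightarrow> int"
  assumes "metric_graph G"
    and "vertex_supported_effective G D"
  shows "finite (cells G D)"
proof -
  note mg = assms(1) and vse = assms(2)
  note fin = mg_facts[OF mg]
  define V where "V = verts G"
  define E where "E = edges G"
  define Ni where "Ni = (\<Sum>v\<in>V. D (Vx v))"
  have Ni0: "Ni \<ge> 0" unfolding Ni_def using vse unfolding vertex_supported_effective_def
    by (simp add: sum_nonneg)
  define Nn where "Nn = nat Ni"
  have NR: "(\<Sum>v\<in>verts G. real_of_int (D (Vx v))) = real Nn"
    unfolding Nn_def using Ni0 unfolding Ni_def V_def by simp
  define K where "K = 2 * Nn"
  define B where "B = Nn + 2 * card E * Nn"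
  define Lists where "Lists = {xs :: nat list. set xs \<subseteq> {..K} \<and> length xs \<le> K}"
  define DV where "DV = {dv :: 'v \<Rightarrow> nat. \<forall>v. dv v \<in> (if v \<in> V then {..B} else {0})}"
  define PS where "PS = {P :: 'e \<Rightarrow> nat list. \<forall>e. P e \<in> (if e \<in> E then Lists else {[]})}"
  define MS where "MS = {m :: 'e \<Rightarrow> int. \<forall>e. m e \<in> (if e \<in> E then {-Ni..Ni} else {0})}"
  have fDV: "finite DV" unfolding DV_def
    by (rule finite_funs[of V _ 0]) (use fin V_def in auto)
  have fL: "finite Lists" unfolding Lists_def by (rule finite_lists_length_le) simp
  have fPS: "finite PS" unfolding PS_def
    by (rule finite_funs[of E _ "[]"]) (use fin E_def fL in auto)
  have fMS: "finite MS" unfolding MS_def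
    by (rule finite_funs[of E _ 0]) (use fin E_def in auto)
  have sub: "cells G D \<subseteq> (\<lambda>(dv, P, m). cell G D dv P m) ` (DV \<times> PS \<times> MS)"
  proof
    fix X assume "X \<in> cells G D"
    then obtain dv P m where X: "X = cell G D dv P m" and ne: "cell G D dv P m \<noteq> {}"
      unfolding cells_def by blast
    then obtain L where L: "in_cell G D dv P m L" unfolding cell_def by blast
    then obtain f where f: "f \<in> RD G D" and Lf: "\<forall>x. real_of_int (L x) = real_of_int (D x) + prin G f x"
      unfolding in_cell_def linsys_def by blast
    have mf: "\<forall>e\<in>edges G. rslope (edge_fun G f e) 0 = of_int (m e)"
      using L f Lf unfolding in_cell_def by blast
    note sl = RD_slopes[OF mg vse f, unfolded NR]
    define dv' where "dv' v = (if v \<in> verts G then dv v else 0)" for v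
    define P' where "P' e = (if e \<in> edges G then P e else [])" for e
    define m' where "m' e = (if e \<in> edges G then m e else 0)" for e
    have Xeq: "X = cell G D dv' P' m'" unfolding X dv'_def P'_def m'_def by (rule cell_restrict)
    have "dv' \<in> DV"
    proof -
      have "dv v \<le> B" if v: "v \<in> verts G" for v
      proof -
        have "real_of_int (L (Vx v)) = real (dv v)" using L v unfolding in_cell_def by simp
        moreover have "real_of_int (L (Vx v)) = real_of_int (D (Vx v))
            + (\<Sum>e\<in>{e\<in>edges G. src G e = v}. rslope (edge_fun G f e) 0)
            + (\<Sum>e\<in>{e\<in>edges G. tgt G e = v}. - lslope (edge_fun G f e) (len G e))"
          using Lf prin_vx[OF v, of f] by simp
        moreover have "D (Vx v) \<le> Ni" unfolding Ni_def
          by (rule member_le_sum) (use v V_def fin vse in \<open>auto simp: vertex_supported_effective_def\<close>)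
        moreover have "(\<Sum>e\<in>{e\<in>edges G. src G e = v}. rslope (edge_fun G f e) 0) \<le> real (card E) * real Nn"
          unfolding E_def by (rule sum_sub_bound) (use fin sl in auto)
        moreover have "(\<Sum>e\<in>{e\<in>edges G. tgt G e = v}. - lslope (edge_fun G f e) (len G e)) \<le> real (card E) * real Nn"
          unfolding E_def by (rule sum_sub_bound) (use fin sl in auto)
        moreover have "real_of_int Ni = real Nn" unfolding Nn_def using Ni0 by simp
        ultimately have "real (dv v) \<le> real B" unfolding B_def by simp
        then show ?thesis by simp
      qed
      then show ?thesis unfolding DV_def dv'_def V_def by auto
    qed
    moreover have "P' \<in> PS"
    proof -
      have "P e \<in> Lists" if e: "e \<in> edges G" for e
      proof -
        from L e obtain xs :: "real list" where xs: "length xs = length (P e)" "sorted_wrt (<) xs"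
          "\<forall>x\<in>set xs. 0 < x \<and> x < len G e"
          "\<forall>t. 0 < t \<and> t < len G e \<longrightarrow>
              L (Ed e t) = (\<Sum>i<length xs. if xs ! i = t then int (P e ! i) else 0)"
          and pos: "\<forall>i<length (P e). P e ! i > 0"
          unfolding in_cell_def by blast
        have dist: "distinct xs" using xs(2) strict_sorted_iff by blast
        have Lxs: "L (Ed e (xs ! j)) = int (P e ! j)" if j: "j < length xs" for j
        proof -
          have "L (Ed e (xs ! j)) = (\<Sum>i<length xs. if xs ! i = xs ! j then int (P e ! i) else 0)"
            using xs(3,4) j by auto
          also have "\<dots> = (\<Sum>i<length xs. if i = j then int (P e ! i) else 0)"
            by (rule sum.cong) (use dist j nth_eq_iff_index_eq in auto)
          also have "\<dots> = int (P e ! j)" using j by simp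
          finally show ?thesis .
        qed
        have mapeq: "map (\<lambda>t. real_of_int (L (Ed e t))) xs = map real (P e)"
          by (rule nth_equalityI) (use xs(1) Lxs in auto)
        have "real (sum_list (P e)) = sum_list (map real (P e))" by (simp add: sum_list_of_nat)
        also have "\<dots> = (\<Sum>t\<in>set xs. real_of_int (L (Ed e t)))"
          using mapeq sum.distinct_set_conv_list[OF dist, of "\<lambda>t. real_of_int (L (Ed e t))"] by simp
        also have "\<dots> = (\<Sum>t\<in>set xs. rslope (edge_fun G f e) t - lslope (edge_fun G f e) t)"
          by (rule sum.cong) (use xs(3) Lf prin_ed[OF e] D_ed[OF vse] in auto)
        also have "\<dots> \<le> 2 * real Nn" by (rule sl(3)[OF e]) (use xs(3) in auto)
        finally have sK: "sum_list (P e) \<le> K" unfolding K_def by linarith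
        have "\<forall>x\<in>set (P e). 0 < x" using pos by (auto simp: in_set_conv_nth)
        then have "length (P e) \<le> K" using length_le_sum_list sK by fastforce
        moreover have "set (P e) \<subseteq> {..K}" using member_le_sum_list sK by fastforce
        ultimately show ?thesis unfolding Lists_def by simp
      qed
      then show ?thesis unfolding PS_def P'_def E_def by auto
    qed
    moreover have "m' \<in> MS"
    proof -
      have "m e \<in> {-Ni..Ni}" if e: "e \<in> edges G" for e
      proof -
        have "\<bar>real_of_int (m e)\<bar> \<le> real Nn" using sl(1)[OF e] mf e by simp
        moreover have "real_of_int Ni = real Nn" unfolding Nn_def using Ni0 by simp
        ultimately have "real_of_int \<bar>m e\<bar> \<le> real_of_int Ni" by simp
        then have "\<bar>m e\<bar> \<le> Ni" by (simp only: of_int_le_iff)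
        then show ?thesis by auto
      qed
      then show ?thesis unfolding MS_def m'_def E_def by auto
    qed
    ultimately show "X \<in> (\<lambda>(dv, P, m). cell G D dv P m) ` (DV \<times> PS \<times> MS)"
      using Xeq by force
  qed
  show ?thesis
    by (rule finite_subset[OF sub]) (use fDV fPS fMS in auto)
qed

end
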